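(* Let $\mathcal O$ be the suboperad of $\mathrm{CNCB}$ generated by $a:=T_{bbb}$ and $c:=T_{buu}$. Then $\mathcal O$ admits the presentation with generators $a,c$ of arity $2$ and relations $$(c\circ_2 a)\circ_3 c = (c\circ_1 c)\circ_2 a,\qquad (a\circ_2 c)\circ_3 a=(a\circ_1 c)\circ_2 a.$$ That is, the operad morphism from the free operad on two binary generators $\alpha,\gamma$ to $\mathcal O$, sending $\alpha\mapsto a$ and $\gamma\mapsto c$, induces an isomorphism between $\mathcal O$ and the quotient of the free operad by the operadic congruence generated by $(\gamma\circ_2\alpha)\circ_3\gamma\equiv(\gamma\circ_1\gamma)\circ_2\alpha$ and $(\alpha\circ_2\gamma)\circ_3\alpha\equiv(\alpha\circ_1\gamma)\circ_2\alpha$.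
   Context: For $n\ge2$, a bicoloured noncrossing configuration (BNC) of size $n$ is a regular polygon with vertices $1,\dots,n+1$ clockwise, together with disjoint sets of blue and red arcs among the arcs $(i,j)$, $1\le i<j\le n+1$. The arcs $(i,i+1)$ are the edges ($i$th edge), $(1,n+1)$ is the base, and the others are diagonals. Coloured arcs are pairwise noncrossing ($(i,j),(k,l)$ cross iff $i<k<j<l$ or $k<i<l<j$), and red arcs are diagonals. There is one BNC of size $1$, a blue segment, which is the unit. The operad $\mathrm{CNCB}$ has the BNCs as elements (arity = size). Its composition $\mathfrak C\circ_i\mathfrak D$ ($\mathfrak C$ of size $n$, $\mathfrak D$ of size $m$) glues the base of $\mathfrak D$ on the $i$th edge of $\mathfrak C$. Arcs $(a,b)$ of $\mathfrak C$ become $(\sigma(a),\sigma(b))$ with $\sigma(v)=v$ for $v\le i$ and $v+m-1$ otherwise, and arcs $(a,b)$ of $\mathfrak D$ become $(a+i-1,b+i-1)$, keeping colours. The exception is the arc $(i,i+m)$, which is red if the $i$th edge of $\mathfrak C$ and the base of $\mathfrak D$ are both uncoloured, blue if both are blue, and uncoloured otherwise. For $x,y,z\in\{b,u\}$, $T_{xyz}$ denotes the BNC of size $2$ (a triangle with vertices $1,2,3$) whose first edge $(1,2)$ has colour $x$, whose base $(1,3)$ has colour $y$, and whose second edge $(2,3)$ has colour $z$, where $b$ = blue and $u$ = uncoloured. The suboperad generated by a set is the smallest suboperad containing it. *)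

theory Defs
  imports Main
begin

text \<open>A BNC of size n: polygon with vertices 1..n+1; arcs are pairs (i,j) with 1 <= i < j <= n+1.
  We record the size, the set of blue arcs and the set of red arcs.\<close>

record bnc =
  bsize :: nat
  blue  :: "(nat \<times> nat) set"
  red   :: "(nat \<times> nat) set"

definition arcs :: "nat \<Rightarrow> (nat \<times> nat) set" where
  "arcs n = {(i, j). 1 \<le> i \<and> i < j \<and> j \<le> n + 1}"

definition crossing :: "nat \<times> nat \<Rightarrow> nat \<times> nat \<Rightarrow> bool" where
  "crossing p q = (case p of (i, j) \<Rightarrow> case q of (k, l) \<Rightarrow>
      (i < k \<and> k < j \<and> j < l) \<or> (k < i \<and> i < l \<and> l < j))"

definition is_diagonal :: "nat \<Rightarrow> nat \<times> nat \<Rightarrow> bool" where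
  "is_diagonal n p = (p \<in> arcs n \<and> snd p \<noteq> fst p + 1 \<and> p \<noteq> (1, n + 1))"

text \<open>The elements of CNCB (not needed in the statement, recorded for reference).\<close>
definition is_bnc :: "bnc \<Rightarrow> bool" where
  "is_bnc C = ((bsize C = 1 \<and> blue C = {(1, 2)} \<and> red C = {}) \<or>
     (bsize C \<ge> 2 \<and> blue C \<subseteq> arcs (bsize C) \<and> red C \<subseteq> arcs (bsize C)
      \<and> blue C \<inter> red C = {}
      \<and> (\<forall>p\<in>red C. is_diagonal (bsize C) p)
      \<and> (\<forall>p\<in>blue C \<union> red C. \<forall>q\<in>blue C \<union> red C. \<not> crossing p q)))"

definition bnc_unit :: bnc where
  "bnc_unit = \<lparr>bsize = 1, blue = {(1, 2)}, red = {}\<rparr>"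

text \<open>Partial composition C o_i D: glue the base of D on the i-th edge of C.\<close>
definition bnc_comp :: "bnc \<Rightarrow> nat \<Rightarrow> bnc \<Rightarrow> bnc" where
  "bnc_comp C i D =
    (let n = bsize C; m = bsize D;
         \<sigma> = (\<lambda>v. if v \<le> i then v else v + m - 1);
         mapC = (\<lambda>(a, b). (\<sigma> a, \<sigma> b));
         mapD = (\<lambda>(a, b). (a + i - 1, b + i - 1));
         e = (i, i + 1); bs = (1, m + 1);
         eb = e \<in> blue C; bb = bs \<in> blue D;
         eu = (e \<notin> blue C \<and> e \<notin> red C); bu = (bs \<notin> blue D \<and> bs \<notin> red D)
     in \<lparr>bsize = n + m - 1,
         blue = mapC ` (blue C - {e}) \<union> mapD ` (blue D - {bs})
                \<union> (if eb \<and> bb then {(i, i + m)} else {}),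
         red = mapC ` (red C - {e}) \<union> mapD ` (red D - {bs})
                \<union> (if eu \<and> bu then {(i, i + m)} else {})\<rparr>)"

text \<open>T_xyz: first edge (1,2) colour x, base (1,3) colour y, second edge (2,3) colour z.\<close>
definition gen_a :: bnc where
  "gen_a = \<lparr>bsize = 2, blue = {(1, 2), (1, 3), (2, 3)}, red = {}\<rparr>"

definition gen_c :: bnc where
  "gen_c = \<lparr>bsize = 2, blue = {(1, 2)}, red = {}\<rparr>"

inductive_set subop_ac :: "bnc set" where
  unit: "bnc_unit \<in> subop_ac"
| gen_a: "gen_a \<in> subop_ac"
| gen_c: "gen_c \<in> subop_ac"
| comp: "x \<in> subop_ac \<Longrightarrow> y \<in> subop_ac \<Longrightarrow> 1 \<le> i \<Longrightarrow> i \<le> bsize x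
          \<Longrightarrow> bnc_comp x i y \<in> subop_ac"

datatype gen = Alpha | Gamma

text \<open>Elements of the free operad: planar binary trees with internal nodes labelled by
  generators; Leaf is the unit (arity 1).\<close>
datatype ftree = Leaf | Node gen ftree ftree

fun arity :: "ftree \<Rightarrow> nat" where
  "arity Leaf = 1"
| "arity (Node g l r) = arity l + arity r"

fun graft :: "ftree \<Rightarrow> nat \<Rightarrow> ftree \<Rightarrow> ftree" where
  "graft Leaf i t = t"
| "graft (Node g l r) i t =
     (if i \<le> arity l then Node g (graft l i t) r else Node g l (graft r (i - arity l) t))"

definition alpha :: ftree where "alpha = Node Alpha Leaf Leaf"
definition gamma :: ftree where "gamma = Node Gamma Leaf Leaf"

inductive fcong :: "ftree \<Rightarrow> ftree \<Rightarrow> bool" where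
  rel1: "fcong (graft (graft gamma 2 alpha) 3 gamma) (graft (graft gamma 1 gamma) 2 alpha)"
| rel2: "fcong (graft (graft alpha 2 gamma) 3 alpha) (graft (graft alpha 1 gamma) 2 alpha)"
| refl: "fcong s s"
| sym: "fcong s t \<Longrightarrow> fcong t s"
| trans: "fcong s t \<Longrightarrow> fcong t u \<Longrightarrow> fcong s u"
| comp: "fcong s s' \<Longrightarrow> fcong t t' \<Longrightarrow> 1 \<le> i \<Longrightarrow> i \<le> arity s \<Longrightarrow> i \<le> arity s'
          \<Longrightarrow> fcong (graft s i t) (graft s' i t')"

fun gen_val :: "gen \<Rightarrow> bnc" where
  "gen_val Alpha = gen_a"
| "gen_val Gamma = gen_c"

fun eval :: "ftree \<Rightarrow> bnc" where
  "eval Leaf = bnc_unit"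
| "eval (Node g l r) = bnc_comp (bnc_comp (gen_val g) 2 (eval r)) 1 (eval l)"

end

theory Submission
  imports Defs
begin

lemma gen_neq [simp]: "(g \<noteq> Alpha) = (g = Gamma)" "(g \<noteq> Gamma) = (g = Alpha)"
  by (cases g; simp)+

fun basic :: "ftree \<Rightarrow> bool" where
  "basic Leaf = True"
| "basic (Node g l r) = (g = Alpha)"

definition oc :: "bool \<Rightarrow> bool \<Rightarrow> ftree \<Rightarrow> bool" where
  "oc c rg t = (if c then \<not> rg \<and> basic t else rg \<and> \<not> basic t)"

fun AC :: "bool \<Rightarrow> bool \<Rightarrow> nat \<Rightarrow> ftree \<Rightarrow> (nat \<times> nat) set" where
  "AC c rg q Leaf = (if oc c rg Leaf then {(q, Suc q)} else {})"
| "AC c rg q (Node g l r) = (if oc c rg (Node g l r) then {(q, q + arity l + arity r)} else {})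
      \<union> AC c False q l \<union> AC c (g = Gamma) (q + arity l) r"

definition FF :: "ftree \<Rightarrow> bnc" where
  "FF t = \<lparr>bsize = arity t, blue = AC True False 1 t, red = AC False False 1 t\<rparr>"

lemma arity_pos: "1 \<le> arity t"
  by (induction t) auto

lemma bounds: "(a,b) \<in> AC c rg q t \<Longrightarrow> q \<le> a \<and> a < b \<and> b \<le> q + arity t"
proof (induction t arbitrary: rg q)
  case Leaf then show ?case by (auto split: if_splits)
next
  case (Node g l r)
  have "1 \<le> arity l" "1 \<le> arity r" by (rule arity_pos)+
  with Node show ?case by (fastforce split: if_splits)
qed

lemma notown:
  assumes "p = (q, q + arity l + arity r)"
  shows "p \<notin> AC c X q l" "p \<notin> AC c Y (q + arity l) r"
proof -
  have "1 \<le> arity l" "1 \<le> arity r" by (rule arity_pos)+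
  then show "p \<notin> AC c X q l" "p \<notin> AC c Y (q + arity l) r"
    using assms bounds[of q "q + arity l + arity r" c X q l]
     bounds[of q "q + arity l + arity r" c Y "q + arity l" r]
    by auto
qed

lemma own: "(q, q + arity t) \<in> AC c rg q t \<longleftrightarrow> oc c rg t"
  using notown[OF HOL.refl] by (cases t) (auto simp: add.assoc)

lemma AC_rg: "AC c rg q t = (AC c False q t - {(q, q + arity t)}) \<union> (if oc c rg t then {(q, q + arity t)} else {})"
  using notown[OF HOL.refl] by (cases t) (auto simp: add.assoc)

definition sh :: "nat \<Rightarrow> nat \<times> nat \<Rightarrow> nat \<times> nat" where
  "sh d p = (fst p + d, snd p + d)"

lemma AC_shift: "AC c rg (q + d) t = sh d ` AC c rg q t"
proof (induction t arbitrary: rg q)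
  case Leaf then show ?case by (auto simp: sh_def)
next
  case (Node g l r)
  have e: "q + d + arity l = (q + arity l) + d" by simp
  show ?case unfolding AC.simps image_Un e Node.IH(1) Node.IH(2)
    by (auto simp: sh_def)
qed

fun lr :: "bool \<Rightarrow> ftree \<Rightarrow> nat \<Rightarrow> bool" where
  "lr rg Leaf i = rg"
| "lr rg (Node g l r) i = (if i \<le> arity l then lr False l i else lr (g = Gamma) r (i - arity l))"

definition mp :: "nat \<Rightarrow> nat \<Rightarrow> nat \<times> nat \<Rightarrow> nat \<times> nat" where
  "mp k m p = ((if fst p \<le> k then fst p else fst p + m - 1), (if snd p \<le> k then snd p else snd p + m - 1))"

lemma arity_graft: "1 \<le> i \<Longrightarrow> i \<le> arity s \<Longrightarrow> arity (graft s i t) = arity s + arity t - 1"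
proof (induction s arbitrary: i)
  case Leaf then show ?case by simp
next
  case (Node g l r)
  have "1 \<le> arity l" "1 \<le> arity r" "1 \<le> arity t" by (rule arity_pos)+
  with Node show ?case by auto
qed

lemma oc_Node: "oc c rg (Node g l r) = oc c rg (Node g l' r')"
  by (simp add: oc_def)

lemma AC_graft: "1 \<le> i \<Longrightarrow> i \<le> arity s \<Longrightarrow>
   AC c rg q (graft s i t) = mp (q + i - 1) (arity t) ` (AC c rg q s - {(q + i - 1, q + i)})
     \<union> AC c (lr rg s i) (q + i - 1) t"
proof (induction s arbitrary: i rg q)
  case Leaf
  then have "i = 1" by simp
  then show ?case by (auto simp: oc_def)
next
  case (Node g l r)
  have al: "1 \<le> arity l" and ar: "1 \<le> arity r" and at: "1 \<le> arity t" by (rule arity_pos)+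
  define m where "m = arity t"
  define e where "e = (q + i - 1, q + i)"
  define own where "own = (if oc c rg (Node g l r) then {(q, q + arity l + arity r)} else {})"
  have mown: "mp (q + i - 1) m ` own = (if oc c rg (Node g l r) then {(q, q + (arity l + arity r + m - 1))} else {})"
    using Node.prems al ar at by (auto simp: own_def mp_def m_def)
  have eown: "e \<notin> own" using al ar Node.prems by (auto simp: own_def e_def)
  show ?case
  proof (cases "i \<le> arity l")
    case True
    have ag: "arity (graft l i t) = arity l + m - 1" using arity_graft[OF Node.prems(1) True] m_def by simp
    have eY: "e \<notin> AC c (g = Gamma) (q + arity l) r"
      using bounds[of "q + i - 1" "q + i" c "g = Gamma" "q + arity l" r] True e_def by auto
    have Y: "mp (q + i - 1) m ` AC c (g = Gamma) (q + arity l) r = AC c (g = Gamma) (q + arity (graft l i t)) r"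
    proof -
      have "AC c (g = Gamma) (q + arity (graft l i t)) r = sh (m - 1) ` AC c (g = Gamma) (q + arity l) r"
        using AC_shift[of c "g = Gamma" "q + arity l" "m - 1" r] ag at m_def by (simp add: add.assoc)
      also have "\<dots> = mp (q + i - 1) m ` AC c (g = Gamma) (q + arity l) r"
      proof (rule image_cong[OF HOL.refl])
        fix x assume "x \<in> AC c (g = Gamma) (q + arity l) r"
        then show "sh (m - 1) x = mp (q + i - 1) m x"
          using bounds[of "fst x" "snd x" c "g = Gamma" "q + arity l" r] True at m_def Node.prems by (auto simp: sh_def mp_def)
      qed
      finally show ?thesis by simp
    qed
    have "AC c rg q (Node g l r) - {e} = own \<union> (AC c False q l - {e}) \<union> AC c (g = Gamma) (q + arity l) r"
      using eown eY by (auto simp: own_def)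
    then have "mp (q + i - 1) m ` (AC c rg q (Node g l r) - {e}) = mp (q + i - 1) m ` own
        \<union> mp (q + i - 1) m ` (AC c False q l - {e}) \<union> AC c (g = Gamma) (q + arity (graft l i t)) r"
      using Y by (simp add: image_Un)
    moreover have "AC c rg q (graft (Node g l r) i t) = (if oc c rg (Node g l r) then {(q, q + (arity l + arity r + m - 1))} else {})
       \<union> AC c False q (graft l i t) \<union> AC c (g = Gamma) (q + arity (graft l i t)) r"
    proof -
      have g: "graft (Node g l r) i t = Node g (graft l i t) r" using True by simp
      have n1: "q + arity (graft l i t) + arity r = q + (arity l + arity r + m - 1)" using ag al at m_def by simp
      show ?thesis unfolding g AC.simps n1 oc_Node[of c rg g "graft l i t" r l r] by simp
    qed
    ultimately show ?thesis
      using Node.IH(1)[OF Node.prems(1) True, of False q] True mown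
      by (auto simp: m_def e_def)
  next
    case False
    define j where "j = i - arity l"
    have j1: "1 \<le> j" and j2: "j \<le> arity r" using False Node.prems by (auto simp: j_def)
    have qj: "q + arity l + j - 1 = q + i - 1" "q + arity l + j = q + i" using False by (auto simp: j_def)
    have ag: "arity (graft r j t) = arity r + m - 1" using arity_graft[OF j1 j2] m_def by simp
    have eX: "e \<notin> AC c False q l"
      using bounds[of "q + i - 1" "q + i" c False q l] False e_def by auto
    have X: "mp (q + i - 1) m ` AC c False q l = AC c False q l"
    proof -
      have "mp (q + i - 1) m ` AC c False q l = id ` AC c False q l"
      proof (rule image_cong[OF HOL.refl])
        fix x assume "x \<in> AC c False q l"
        then show "mp (q + i - 1) m x = id x"
          using bounds[of "fst x" "snd x" c False q l] False by (auto simp: mp_def)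
      qed
      then show ?thesis by simp
    qed
    have "AC c rg q (Node g l r) - {e} = own \<union> AC c False q l \<union> (AC c (g = Gamma) (q + arity l) r - {e})"
      using eown eX by (auto simp: own_def)
    then have "mp (q + i - 1) m ` (AC c rg q (Node g l r) - {e}) = mp (q + i - 1) m ` own
        \<union> AC c False q l \<union> mp (q + i - 1) m ` (AC c (g = Gamma) (q + arity l) r - {e})"
      using X by (simp add: image_Un)
    moreover have "AC c rg q (graft (Node g l r) i t) = (if oc c rg (Node g l r) then {(q, q + (arity l + arity r + m - 1))} else {})
       \<union> AC c False q l \<union> AC c (g = Gamma) (q + arity l) (graft r j t)"
    proof -
      have g: "graft (Node g l r) i t = Node g l (graft r j t)" using False by (simp add: j_def)
      have n1: "q + arity l + arity (graft r j t) = q + (arity l + arity r + m - 1)" using ag ar at m_def by simp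
      show ?thesis unfolding g AC.simps n1 oc_Node[of c rg g l "graft r j t" l r] by simp
    qed
    ultimately show ?thesis
      using Node.IH(2)[OF j1 j2, of "g = Gamma" "q + arity l"] False mown qj
      by (auto simp: m_def e_def j_def)
  qed
qed


lemma leaf_edge: "1 \<le> i \<Longrightarrow> i \<le> arity s \<Longrightarrow> ((q + i - 1, q + i) \<in> AC c rg q s \<longleftrightarrow> oc c (lr rg s i) Leaf)"
proof (induction s arbitrary: i rg q)
  case Leaf
  then show ?case by (auto simp: oc_def)
next
  case (Node g l r)
  have al: "1 \<le> arity l" and ar: "1 \<le> arity r" by (rule arity_pos)+
  show ?case
  proof (cases "i \<le> arity l")
    case True
    then show ?thesis using Node.IH(1)[OF Node.prems(1) True, where rg=False and q=q] al ar
      bounds[of "q + i - 1" "q + i" c "g = Gamma" "q + arity l" r] Node.prems by auto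
  next
    case False
    define j where "j = i - arity l"
    have j1: "1 \<le> j" and j2: "j \<le> arity r" using False Node.prems by (auto simp: j_def)
    have qj: "q + arity l + j - 1 = q + i - 1" "q + arity l + j = q + i" using False by (auto simp: j_def)
    show ?thesis using Node.IH(2)[OF j1 j2, where rg="g = Gamma" and q="q + arity l"] False qj
      bounds[of "q + i - 1" "q + i" c False q l] al ar by (auto simp: j_def)
  qed
qed

lemma FF_graft: "1 \<le> i \<Longrightarrow> i \<le> arity s \<Longrightarrow> FF (graft s i t) = bnc_comp (FF s) i (FF t)"
proof -
  assume i1: "1 \<le> i" and i2: "i \<le> arity s"
  have at: "1 \<le> arity t" by (rule arity_pos)
  define L where "L = lr False s i"
  define \<sigma> where "\<sigma> = (\<lambda>v. if v \<le> i then v else v + arity t - 1)"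
  have mpeq: "mp (1 + i - 1) (arity t) = (\<lambda>(a, b). (\<sigma> a, \<sigma> b))"
    by (auto simp: mp_def \<sigma>_def fun_eq_iff)
  have mD: "(\<lambda>(a, b). (a + i - 1, b + i - 1)) = sh (i - 1)"
    using i1 by (auto simp: sh_def fun_eq_iff)
  have e1: "(1 + i - 1, 1 + i) = (i, i + 1)" by simp
  have sht: "AC c L i t = sh (i - 1) ` ((AC c False 1 t - {(1, arity t + 1)}) \<union> (if oc c L t then {(1, 1 + arity t)} else {}))" for c
    using AC_shift[of c L 1 "i - 1" t] AC_rg[of c L 1 t] i1 by (simp add: add.commute)
  have shb: "sh (i - 1) (1, 1 + arity t) = (i, i + arity t)" using i1 by (simp add: sh_def)
  have eB: "(i, i + 1) \<in> AC True False 1 s \<longleftrightarrow> \<not> L"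
    using leaf_edge[OF i1 i2, of 1 True False] by (simp add: oc_def L_def add.commute)
  have eR: "(i, i + 1) \<notin> AC False False 1 s"
    using leaf_edge[OF i1 i2, of 1 False False] by (simp add: oc_def L_def add.commute)
  have bB: "(1, arity t + 1) \<in> AC True False 1 t \<longleftrightarrow> basic t"
    using own[of 1 t True False] by (simp add: oc_def add.commute)
  have bR: "(1, arity t + 1) \<notin> AC False False 1 t"
    using own[of 1 t False False] by (simp add: oc_def add.commute)
  have B: "AC True False 1 (graft s i t) = (\<lambda>(a, b). (\<sigma> a, \<sigma> b)) ` (AC True False 1 s - {(i, i + 1)})
      \<union> sh (i - 1) ` (AC True False 1 t - {(1, arity t + 1)})
      \<union> (if (i, i + 1) \<in> AC True False 1 s \<and> (1, arity t + 1) \<in> AC True False 1 t then {(i, i + arity t)} else {})"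
  proof -
    have "AC True False 1 (graft s i t) = mp (1 + i - 1) (arity t) ` (AC True False 1 s - {(1 + i - 1, 1 + i)}) \<union> AC True L i t"
      using AC_graft[OF i1 i2, of True False 1 t] i1 by (simp add: L_def)
    also have "\<dots> = (\<lambda>(a, b). (\<sigma> a, \<sigma> b)) ` (AC True False 1 s - {(i, i + 1)}) \<union> AC True L i t"
      by (simp only: mpeq e1)
    finally show ?thesis unfolding sht[of True] image_Un using eB bB shb by (auto simp: oc_def)
  qed
  have R: "AC False False 1 (graft s i t) = (\<lambda>(a, b). (\<sigma> a, \<sigma> b)) ` (AC False False 1 s - {(i, i + 1)})
      \<union> sh (i - 1) ` (AC False False 1 t - {(1, arity t + 1)})
      \<union> (if ((i, i + 1) \<notin> AC True False 1 s \<and> (i, i + 1) \<notin> AC False False 1 s) \<and>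
              ((1, arity t + 1) \<notin> AC True False 1 t \<and> (1, arity t + 1) \<notin> AC False False 1 t) then {(i, i + arity t)} else {})"
  proof -
    have "AC False False 1 (graft s i t) = mp (1 + i - 1) (arity t) ` (AC False False 1 s - {(1 + i - 1, 1 + i)}) \<union> AC False L i t"
      using AC_graft[OF i1 i2, of False False 1 t] i1 by (simp add: L_def)
    also have "\<dots> = (\<lambda>(a, b). (\<sigma> a, \<sigma> b)) ` (AC False False 1 s - {(i, i + 1)}) \<union> AC False L i t"
      by (simp only: mpeq e1)
    finally show ?thesis unfolding sht[of False] image_Un using eB bB shb eR bR by (auto simp: oc_def)
  qed
  show ?thesis
    unfolding FF_def bnc_comp_def Let_def bnc.simps
    by (simp only: B R mD[symmetric] arity_graft[OF i1 i2] \<sigma>_def bnc.ext_inject)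
qed

lemma gen_val_FF: "gen_val g = FF (Node g Leaf Leaf)"
  by (cases g) (auto simp: FF_def gen_a_def gen_c_def oc_def)

lemma eval_FF: "eval t = FF t"
proof (induction t)
  case Leaf then show ?case by (simp add: FF_def bnc_unit_def oc_def)
next
  case (Node g l r)
  have "eval (Node g l r) = bnc_comp (bnc_comp (FF (Node g Leaf Leaf)) 2 (FF r)) 1 (FF l)"
    using Node gen_val_FF by simp
  also have "\<dots> = bnc_comp (FF (graft (Node g Leaf Leaf) 2 r)) 1 (FF l)"
    by (subst FF_graft) auto
  also have "\<dots> = FF (graft (graft (Node g Leaf Leaf) 2 r) 1 l)"
    by (subst FF_graft) (auto simp: arity_pos)
  also have "graft (graft (Node g Leaf Leaf) 2 r) 1 l = Node g l r" by simp
  finally show ?case .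
qed

lemma part1: "1 \<le> i \<Longrightarrow> i \<le> arity s \<Longrightarrow> eval (graft s i t) = bnc_comp (eval s) i (eval t)"
  by (simp add: eval_FF FF_graft)

lemma bsize_eval: "bsize (eval s) = arity s"
  by (simp add: eval_FF FF_def)

lemma part2: "range eval = subop_ac"
proof
  show "range eval \<subseteq> subop_ac"
  proof
    fix x assume "x \<in> range eval"
    then obtain t where x: "x = eval t" by auto
    have "eval t \<in> subop_ac"
    proof (induction t)
      case Leaf then show ?case by (simp add: subop_ac.unit)
    next
      case (Node g l r)
      have G: "gen_val g \<in> subop_ac" by (cases g) (auto intro: subop_ac.intros)
      have bg: "bsize (gen_val g) = 2" by (cases g) (auto simp: gen_a_def gen_c_def)
      have "bnc_comp (gen_val g) 2 (eval r) \<in> subop_ac"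
        using subop_ac.comp[OF G Node(2)] bg by simp
      moreover have "1 \<le> bsize (bnc_comp (gen_val g) 2 (eval r))"
        by (simp add: bnc_comp_def Let_def bg)
      ultimately show ?case using subop_ac.comp[OF _ Node(1)] by simp
    qed
    then show "x \<in> subop_ac" using x by simp
  qed
next
  show "subop_ac \<subseteq> range eval"
  proof
    fix x assume "x \<in> subop_ac"
    then show "x \<in> range eval"
    proof (induction rule: subop_ac.induct)
      case unit
      have "eval Leaf = bnc_unit" by simp
      then show ?case by (metis rangeI)
    next
      case gen_a
      have "eval (Node Alpha Leaf Leaf) = gen_a" by (simp add: eval_FF gen_val_FF[symmetric])
      then show ?case by (metis rangeI)
    next
      case gen_c
      have "eval (Node Gamma Leaf Leaf) = gen_c" by (simp add: eval_FF gen_val_FF[symmetric])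
      then show ?case by (metis rangeI)
    next
      case (comp x y i)
      obtain s where s: "x = eval s" using comp by auto
      obtain t where t: "y = eval t" using comp by auto
      have "i \<le> arity s" using comp s bsize_eval by simp
      then have "eval (graft s i t) = bnc_comp x i y" using part1 comp s t by simp
      then show ?case by (metis rangeI)
    qed
  qed
qed

lemma fcong_arity: "fcong s t \<Longrightarrow> arity s = arity t"
proof (induction rule: fcong.induct)
  case (comp s s' t t' i)
  then show ?case using arity_graft[of i s t] arity_graft[of i s' t'] by simp
qed (auto simp: alpha_def gamma_def)

lemma fcong_eval: "fcong s t \<Longrightarrow> eval s = eval t"
proof (induction rule: fcong.induct)
  case rel1
  show ?case by (simp add: eval_FF FF_def alpha_def gamma_def oc_def insert_commute)
next
  case rel2
  show ?case by (simp add: eval_FF FF_def alpha_def gamma_def oc_def insert_commute)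
next
  case (comp s s' t t' i)
  then show ?case using part1 by simp
qed auto

fun bad :: "ftree \<Rightarrow> bool" where
  "bad (Node Gamma x (Node Alpha y z)) = True"
| "bad _ = False"

fun normal :: "ftree \<Rightarrow> bool" where
  "normal Leaf = True"
| "normal (Node g l r) = (normal l \<and> normal r \<and> \<not> bad l)"

fun sz :: "ftree \<Rightarrow> nat" where
  "sz Leaf = 0"
| "sz (Node g l r) = Suc (sz l + sz r)"

lemma fcong_graft1: "fcong P Q \<Longrightarrow> 1 \<le> i \<Longrightarrow> i \<le> arity P \<Longrightarrow> fcong (graft P i t) (graft Q i t)"
  using fcong.comp[OF _ fcong.refl, where s=P and s'=Q and t=t and i=i] fcong_arity[of P Q] by simp

lemma fcong_Node: "fcong l l' \<Longrightarrow> fcong r r' \<Longrightarrow> fcong (Node g l r) (Node g l' r')"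
proof -
  assume l: "fcong l l'" and r: "fcong r r'"
  have "fcong (graft (Node g Leaf Leaf) 2 r) (graft (Node g Leaf Leaf) 2 r')"
    using fcong.comp[OF fcong.refl r, of 2 "Node g Leaf Leaf"] by simp
  then have "fcong (Node g Leaf r) (Node g Leaf r')" by simp
  then have "fcong (graft (Node g Leaf r) 1 l) (graft (Node g Leaf r') 1 l')"
    using fcong.comp[OF _ l, where s="Node g Leaf r" and s'="Node g Leaf r'" and i=1] by simp
  then show ?thesis by simp
qed

lemma subst4: "fcong P Q \<Longrightarrow> arity P = 4 \<Longrightarrow>
  fcong (graft (graft (graft (graft P 4 w) 3 z) 2 y) 1 x) (graft (graft (graft (graft Q 4 w) 3 z) 2 y) 1 x)"
proof -
  assume f: "fcong P Q" and a: "arity P = 4"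
  have aw: "1 \<le> arity w" "1 \<le> arity z" "1 \<le> arity y" by (rule arity_pos)+
  have f1: "fcong (graft P 4 w) (graft Q 4 w)" using fcong_graft1[OF f] a by simp
  have a1: "arity (graft P 4 w) = 3 + arity w" using arity_graft[of 4 P w] a aw by simp
  have f2: "fcong (graft (graft P 4 w) 3 z) (graft (graft Q 4 w) 3 z)" using fcong_graft1[OF f1] a1 by simp
  have a2: "arity (graft (graft P 4 w) 3 z) = 2 + arity z + arity w" using arity_graft[of 3 "graft P 4 w" z] a1 aw by simp
  have f3: "fcong (graft (graft (graft P 4 w) 3 z) 2 y) (graft (graft (graft Q 4 w) 3 z) 2 y)" using fcong_graft1[OF f2] a2 by simp
  have a3: "arity (graft (graft (graft P 4 w) 3 z) 2 y) = 1 + arity y + arity z + arity w"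
    using arity_graft[of 2 "graft (graft P 4 w) 3 z" y] a2 aw by simp
  show ?thesis using fcong_graft1[OF f3] a3 by simp
qed

lemma rw_step: "fcong (Node g (Node Gamma x (Node Alpha y z)) w)
   (Node g x (Node (if g = Alpha then Gamma else Alpha) y (Node g z w)))"
proof (cases g)
  case Alpha
  have "fcong (graft (graft alpha 1 gamma) 2 alpha) (graft (graft alpha 2 gamma) 3 alpha)"
    by (rule fcong.sym[OF fcong.rel2])
  from subst4[OF this, of w z y x] show ?thesis using Alpha by (simp add: alpha_def gamma_def)
next
  case Gamma
  have "fcong (graft (graft gamma 1 gamma) 2 alpha) (graft (graft gamma 2 alpha) 3 gamma)"
    by (rule fcong.sym[OF fcong.rel1])
  from subst4[OF this, of w z y x] show ?thesis using Gamma by (simp add: alpha_def gamma_def)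
qed

declare fcong.trans[trans]

lemma norm_node: "normal l \<Longrightarrow> normal r \<Longrightarrow> \<exists>n. normal n \<and> fcong (Node g l r) n"
proof (induction "sz l" arbitrary: l r g rule: less_induct)
  case less
  show ?case
  proof (cases "bad l")
    case False
    then have "normal (Node g l r)" using less.prems by simp
    then show ?thesis using fcong.refl by blast
  next
    case True
    then obtain x y z where l: "l = Node Gamma x (Node Alpha y z)" by (cases l rule: bad.cases) auto
    have nx: "normal x" and ny: "normal y" and nz: "normal z" using less.prems l by auto
    obtain n1 where n1: "normal n1" "fcong (Node g z r) n1"
      using less.hyps[of z r g] nz less.prems(2) l by auto
    obtain n2 where n2: "normal n2" "fcong (Node (if g = Alpha then Gamma else Alpha) y n1) n2"
      using less.hyps[of y n1] ny n1(1) l by auto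
    obtain n3 where n3: "normal n3" "fcong (Node g x n2) n3"
      using less.hyps[of x n2 g] nx n2(1) l by auto
    have "fcong (Node g l r) (Node g x (Node (if g = Alpha then Gamma else Alpha) y (Node g z r)))"
      using rw_step l by simp
    also have "fcong \<dots> (Node g x (Node (if g = Alpha then Gamma else Alpha) y n1))"
      by (intro fcong_Node fcong.refl n1(2))
    also have "fcong \<dots> (Node g x n2)"
      by (intro fcong_Node fcong.refl n2(2))
    finally show ?thesis using n3 fcong.trans by blast
  qed
qed

lemma norm_ex: "\<exists>n. normal n \<and> fcong t n"
proof (induction t)
  case Leaf
  have "normal Leaf" by simp
  then show ?case using fcong.refl by blast
next
  case (Node g l r)
  then obtain nl nr where "normal nl" "fcong l nl" "normal nr" "fcong r nr" by auto
  moreover obtain n where "normal n" "fcong (Node g nl nr) n" using norm_node calculation by blast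
  ultimately show ?case using fcong_Node fcong.trans by blast
qed

fun ub :: "bool \<Rightarrow> nat \<Rightarrow> ftree \<Rightarrow> nat set" where
  "ub rg q Leaf = {}"
| "ub rg q (Node g l r) = (if rg \<noteq> (g = Alpha) then {}
     else ub False q l \<union> {q + arity l} \<union> ub (g = Gamma) (q + arity l) r)"

fun Cr :: "bool \<Rightarrow> nat \<Rightarrow> ftree \<Rightarrow> nat set" where
  "Cr rg q Leaf = (if rg then {} else {q})"
| "Cr rg q (Node g l r) = (if rg \<noteq> (g = Alpha) then (if \<not> rg \<and> g = Alpha then {q} else {})
     else Cr False q l \<union> Cr (g = Gamma) (q + arity l) r)"

definition covd :: "(nat \<times> nat) set \<Rightarrow> nat \<Rightarrow> bool" where
  "covd S v = (\<exists>p\<in>S. fst p < v \<and> v < snd p)"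

definition ACU :: "bool \<Rightarrow> nat \<Rightarrow> ftree \<Rightarrow> (nat \<times> nat) set" where
  "ACU rg q t = AC True rg q t \<union> AC False rg q t"

lemma ub_range: "v \<in> ub rg q t \<Longrightarrow> q < v \<and> v < q + arity t"
proof (induction t arbitrary: rg q)
  case Leaf then show ?case by simp
next
  case (Node g l r)
  have "1 \<le> arity l" "1 \<le> arity r" by (rule arity_pos)+
  with Node.prems Node.IH(1)[where rg=False and q=q] Node.IH(2)[where rg="g = Gamma" and q="q + arity l"]
  show ?case by (auto split: if_splits)
qed

lemma boundsU: "(a, b) \<in> ACU rg q t \<Longrightarrow> q \<le> a \<and> a < b \<and> b \<le> q + arity t"
  unfolding ACU_def using bounds by blast

lemma ACU_Node: "rg = (g = Alpha) \<Longrightarrow> ACU rg q (Node g l r) = ACU False q l \<union> ACU (g = Gamma) (q + arity l) r"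
  by (cases g) (auto simp: ACU_def oc_def)

lemma uncov: "q < v \<Longrightarrow> v < q + arity t \<Longrightarrow> (\<not> covd (ACU rg q t) v \<longleftrightarrow> v \<in> ub rg q t)"
proof (induction t arbitrary: rg q)
  case Leaf then show ?case by simp
next
  case (Node g l r)
  show ?case
  proof (cases "rg = (g = Alpha)")
    case False
    have "(q, q + arity (Node g l r)) \<in> ACU rg q (Node g l r)"
      using own[of q "Node g l r" True rg] own[of q "Node g l r" False rg] False
      by (cases g) (auto simp: ACU_def oc_def)
    then have "covd (ACU rg q (Node g l r)) v" using Node.prems unfolding covd_def by force
    then show ?thesis using False by simp
  next
    case True
    have e: "ACU rg q (Node g l r) = ACU False q l \<union> ACU (g = Gamma) (q + arity l) r"
      using ACU_Node[OF True] .
    have ubN: "ub rg q (Node g l r) = ub False q l \<union> {q + arity l} \<union> ub (g = Gamma) (q + arity l) r"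
      using True by simp
    have cl: "covd (ACU False q l) v \<Longrightarrow> v < q + arity l"
      unfolding covd_def using boundsU by fastforce
    have cr: "covd (ACU (g = Gamma) (q + arity l) r) v \<Longrightarrow> q + arity l < v"
      unfolding covd_def using boundsU by fastforce
    have ul: "x \<in> ub False q l \<Longrightarrow> x < q + arity l" for x using ub_range by blast
    have ur: "x \<in> ub (g = Gamma) (q + arity l) r \<Longrightarrow> q + arity l < x" for x using ub_range by blast
    consider (a) "v < q + arity l" | (b) "v = q + arity l" | (c) "q + arity l < v" by linarith
    then show ?thesis
    proof cases
      case a
      then have "(\<not> covd (ACU False q l) v) = (v \<in> ub False q l)" using Node.IH(1) Node.prems by simp
      then show ?thesis unfolding e ubN using a cr by (auto simp: covd_def dest: ur)
    next
      case b
      then show ?thesis unfolding e ubN using cl cr by (auto simp: covd_def)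
    next
      case c
      then have "(\<not> covd (ACU (g = Gamma) (q + arity l) r) v) = (v \<in> ub (g = Gamma) (q + arity l) r)"
        using Node.IH(2) Node.prems by simp
      then show ?thesis unfolding e ubN using c cl by (auto simp: covd_def dest: ul)
    qed
  qed
qed

lemma Cr_sub: "Cr rg q t \<subseteq> insert q (ub rg q t)"
proof (induction t arbitrary: rg q)
  case Leaf then show ?case by simp
next
  case (Node g l r)
  have "Cr (g = Gamma) (q + arity l) r \<subseteq> insert (q + arity l) (ub (g = Gamma) (q + arity l) r)"
    using Node.IH(2) .
  moreover have "Cr False q l \<subseteq> insert q (ub False q l)" using Node.IH(1) .
  ultimately show ?case by auto
qed

lemma Cchar: "v \<in> insert q (ub rg q t) \<Longrightarrow>
   ((\<exists>w. (v, w) \<in> AC True rg q t \<and> (w \<in> ub rg q t \<or> w = q + arity t)) \<longleftrightarrow> v \<in> Cr rg q t)"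
proof (induction t arbitrary: rg q)
  case Leaf then show ?case by (auto simp: oc_def)
next
  case (Node g l r)
  show ?case
  proof (cases "rg = (g = Alpha)")
    case False
    then have v: "v = q" using Node.prems by simp
    have ub0: "ub rg q (Node g l r) = {}" using False by simp
    have "(\<exists>w. (q, w) \<in> AC True rg q (Node g l r) \<and> w = q + arity (Node g l r)) \<longleftrightarrow> oc True rg (Node g l r)"
      using own[of q "Node g l r" True rg] by auto
    then show ?thesis using v ub0 False by (auto simp: oc_def)
  next
    case True
    have e: "AC True rg q (Node g l r) = AC True False q l \<union> AC True (g = Gamma) (q + arity l) r"
      using True by (cases g) (auto simp: oc_def)
    have ubN: "ub rg q (Node g l r) = ub False q l \<union> {q + arity l} \<union> ub (g = Gamma) (q + arity l) r"
      using True by simp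
    have CN: "Cr rg q (Node g l r) = Cr False q l \<union> Cr (g = Gamma) (q + arity l) r"
      using True by simp
    have ul: "x \<in> ub False q l \<Longrightarrow> q < x \<and> x < q + arity l" for x using ub_range by blast
    have ur: "x \<in> ub (g = Gamma) (q + arity l) r \<Longrightarrow> q + arity l < x" for x using ub_range by blast
    have Cl: "x \<in> Cr False q l \<Longrightarrow> x \<in> insert q (ub False q l)" for x using Cr_sub by blast
    have Cr': "x \<in> Cr (g = Gamma) (q + arity l) r \<Longrightarrow> x \<in> insert (q + arity l) (ub (g = Gamma) (q + arity l) r)" for x using Cr_sub by blast
    have al: "1 \<le> arity l" by (rule arity_pos)
    have bl: "(a, b) \<in> AC True False q l \<Longrightarrow> q \<le> a \<and> a < b \<and> b \<le> q + arity l" for a b using bounds by blast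
    have br: "(a, b) \<in> AC True (g = Gamma) (q + arity l) r \<Longrightarrow> q + arity l \<le> a \<and> a < b \<and> b \<le> q + arity l + arity r" for a b using bounds by blast
    consider (a) "v \<in> insert q (ub False q l)" | (b) "v \<in> insert (q + arity l) (ub (g = Gamma) (q + arity l) r)"
      using Node.prems ubN by auto
    then show ?thesis
    proof cases
      case a
      then have vl: "v < q + arity l" using ul al by auto
      have "(\<exists>w. (v, w) \<in> AC True rg q (Node g l r) \<and> (w \<in> ub rg q (Node g l r) \<or> w = q + arity (Node g l r)))
          \<longleftrightarrow> (\<exists>w. (v, w) \<in> AC True False q l \<and> (w \<in> ub False q l \<or> w = q + arity l))"
      proof
        assume "\<exists>w. (v, w) \<in> AC True rg q (Node g l r) \<and> (w \<in> ub rg q (Node g l r) \<or> w = q + arity (Node g l r))"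
        then obtain w where w1: "(v, w) \<in> AC True False q l \<or> (v, w) \<in> AC True (g = Gamma) (q + arity l) r"
          and w2: "w \<in> ub False q l \<or> w = q + arity l \<or> w \<in> ub (g = Gamma) (q + arity l) r \<or> w = q + arity l + arity r"
          unfolding e ubN by (auto simp: add.assoc)
        have vw: "(v, w) \<in> AC True False q l" using w1 br[of v w] vl by auto
        moreover have "w \<le> q + arity l" using bl[OF vw] by simp
        moreover have "1 \<le> arity r" by (rule arity_pos)
        ultimately show "\<exists>w. (v, w) \<in> AC True False q l \<and> (w \<in> ub False q l \<or> w = q + arity l)"
          using w2 ur[of w] by auto
      next
        assume "\<exists>w. (v, w) \<in> AC True False q l \<and> (w \<in> ub False q l \<or> w = q + arity l)"
        then show "\<exists>w. (v, w) \<in> AC True rg q (Node g l r) \<and> (w \<in> ub rg q (Node g l r) \<or> w = q + arity (Node g l r))"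
          unfolding e ubN by auto
      qed
      also have "\<dots> \<longleftrightarrow> v \<in> Cr False q l" using Node.IH(1)[OF a] .
      also have "\<dots> \<longleftrightarrow> v \<in> Cr rg q (Node g l r)" unfolding CN using vl Cr' ur by force
      finally show ?thesis .
    next
      case b
      then have vr: "q + arity l \<le> v" using ur by force
      have "(\<exists>w. (v, w) \<in> AC True rg q (Node g l r) \<and> (w \<in> ub rg q (Node g l r) \<or> w = q + arity (Node g l r)))
          \<longleftrightarrow> (\<exists>w. (v, w) \<in> AC True (g = Gamma) (q + arity l) r \<and> (w \<in> ub (g = Gamma) (q + arity l) r \<or> w = q + arity l + arity r))"
      proof
        assume "\<exists>w. (v, w) \<in> AC True rg q (Node g l r) \<and> (w \<in> ub rg q (Node g l r) \<or> w = q + arity (Node g l r))"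
        then obtain w where w1: "(v, w) \<in> AC True False q l \<or> (v, w) \<in> AC True (g = Gamma) (q + arity l) r"
          and w2: "w \<in> ub False q l \<or> w = q + arity l \<or> w \<in> ub (g = Gamma) (q + arity l) r \<or> w = q + arity l + arity r"
          unfolding e ubN by (auto simp: add.assoc)
        have vw: "(v, w) \<in> AC True (g = Gamma) (q + arity l) r" using w1 bl[of v w] vr by auto
        moreover have "v < w" using br[OF vw] by simp
        ultimately show "\<exists>w. (v, w) \<in> AC True (g = Gamma) (q + arity l) r \<and> (w \<in> ub (g = Gamma) (q + arity l) r \<or> w = q + arity l + arity r)"
          using w2 ul[of w] vr by auto
      next
        assume "\<exists>w. (v, w) \<in> AC True (g = Gamma) (q + arity l) r \<and> (w \<in> ub (g = Gamma) (q + arity l) r \<or> w = q + arity l + arity r)"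
        then show "\<exists>w. (v, w) \<in> AC True rg q (Node g l r) \<and> (w \<in> ub rg q (Node g l r) \<or> w = q + arity (Node g l r))"
          unfolding e ubN by (auto simp: add.assoc)
      qed
      also have "\<dots> \<longleftrightarrow> v \<in> Cr (g = Gamma) (q + arity l) r" using Node.IH(2)[OF b] .
      also have "\<dots> \<longleftrightarrow> v \<in> Cr rg q (Node g l r)" unfolding CN using vr Cl ul al by force
      finally show ?thesis .
    qed
  qed
qed

lemma Cr_left: "q \<in> Cr False q t"
  by (induction t arbitrary: q) auto

lemma Cr_normal: "normal t \<Longrightarrow> \<not> bad t \<Longrightarrow> Cr False q t \<subseteq> {q}"
proof (induction t arbitrary: q)
  case Leaf then show ?case by simp
next
  case (Node g l r)
  show ?case
  proof (cases g)
    case Alpha then show ?thesis by simp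
  next
    case Gamma
    have nb: "\<not> bad (Node Gamma l r)" using Node.prems Gamma by simp
    have "Cr True (q + arity l) r = {}"
    proof (cases r)
      case Leaf then show ?thesis by simp
    next
      case (Node g2 a b) then show ?thesis using nb by (cases g2) auto
    qed
    moreover have "Cr False q l \<subseteq> {q}" using Node.IH(1) Node.prems by simp
    ultimately show ?thesis using Gamma by simp
  qed
qed

lemma ub_nonempty: "ub rg q t \<noteq> {} \<Longrightarrow> q \<in> Cr rg q t"
  by (cases t) (auto simp: Cr_left split: if_splits)

definition Vset :: "bnc \<Rightarrow> nat set" where
  "Vset C = {v. 1 < v \<and> v < bsize C + 1 \<and> \<not> covd ((blue C \<union> red C) - {(1, bsize C + 1)}) v}"

definition cand :: "bnc \<Rightarrow> nat \<Rightarrow> bool" where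
  "cand C v = (v \<in> Vset C \<and> (\<exists>w. (v, w) \<in> blue C \<and> (w \<in> Vset C \<or> w = bsize C + 1)))"

definition splitv :: "bnc \<Rightarrow> nat" where
  "splitv C = (if \<exists>v. cand C v then (LEAST v. cand C v) else Max (Vset C))"

lemma root_arcs:
  assumes "s = Node g l r"
  shows "(blue (FF s) \<union> red (FF s)) - {(1, bsize (FF s) + 1)} = ACU (g = Alpha) 1 s"
    and "blue (FF s) - {(1, bsize (FF s) + 1)} = AC True (g = Alpha) 1 s"
proof -
  have b: "(1, 1 + arity s) \<notin> AC c (g = Alpha) 1 s" for c
    using own[of 1 s c "g = Alpha"] assms by (auto simp: oc_def)
  have e: "AC c False 1 s - {(1, 1 + arity s)} = AC c (g = Alpha) 1 s" for c
  proof -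
    have "\<not> oc c (g = Alpha) s" using assms by (auto simp: oc_def)
    then show ?thesis by (subst AC_rg[of c "g = Alpha" 1 s]) simp
  qed
  show "(blue (FF s) \<union> red (FF s)) - {(1, bsize (FF s) + 1)} = ACU (g = Alpha) 1 s"
    using e[of True] e[of False] by (auto simp: FF_def ACU_def add.commute)
  show "blue (FF s) - {(1, bsize (FF s) + 1)} = AC True (g = Alpha) 1 s"
    using e[of True] by (auto simp: FF_def add.commute)
qed

lemma Vroot: "s = Node g l r \<Longrightarrow> Vset (FF s) = ub (g = Alpha) 1 s"
proof -
  assume s: "s = Node g l r"
  have "Vset (FF s) = {v. 1 < v \<and> v < 1 + arity s \<and> \<not> covd (ACU (g = Alpha) 1 s) v}"
    unfolding Vset_def root_arcs(1)[OF s] by (auto simp: FF_def)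
  also have "\<dots> = ub (g = Alpha) 1 s"
    using uncov[of 1 _ s "g = Alpha"] ub_range[of _ "g = Alpha" 1 s] by auto
  finally show ?thesis .
qed

lemma cand_root: "s = Node g l r \<Longrightarrow> cand (FF s) v \<longleftrightarrow> v \<in> ub (g = Alpha) 1 s \<and> v \<in> Cr (g = Alpha) 1 s"
proof -
  assume s: "s = Node g l r"
  have V: "Vset (FF s) = ub (g = Alpha) 1 s" using Vroot[OF s] .
  show ?thesis
  proof (cases "v \<in> ub (g = Alpha) 1 s")
    case True
    then have v1: "1 < v" using ub_range by blast
    have "(\<exists>w. (v, w) \<in> blue (FF s) \<and> (w \<in> Vset (FF s) \<or> w = bsize (FF s) + 1))
        \<longleftrightarrow> (\<exists>w. (v, w) \<in> AC True (g = Alpha) 1 s \<and> (w \<in> ub (g = Alpha) 1 s \<or> w = 1 + arity s))"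
    proof -
      have "(v, w) \<in> blue (FF s) \<longleftrightarrow> (v, w) \<in> AC True (g = Alpha) 1 s" for w
        using root_arcs(2)[OF s] v1 by blast
      then show ?thesis using V by (auto simp: FF_def add.commute)
    qed
    also have "\<dots> \<longleftrightarrow> v \<in> Cr (g = Alpha) 1 s" using Cchar[of v 1 "g = Alpha" s] True by simp
    finally show ?thesis using True V by (simp add: cand_def)
  next
    case False
    then show ?thesis using V by (simp add: cand_def)
  qed
qed

lemma split_root: "normal (Node g l r) \<Longrightarrow> splitv (FF (Node g l r)) = 1 + arity l"
proof -
  assume n: "normal (Node g l r)"
  define s where "s = Node g l r"
  define k where "k = 1 + arity l"
  have ubs: "ub (g = Alpha) 1 s = ub False 1 l \<union> {k} \<union> ub (g = Gamma) k r" by (simp add: s_def k_def)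
  have Crs: "Cr (g = Alpha) 1 s = Cr False 1 l \<union> Cr (g = Gamma) k r" by (simp add: s_def k_def)
  have Cl: "Cr False 1 l \<subseteq> {1}" using Cr_normal n by simp
  have ul: "x \<in> ub False 1 l \<Longrightarrow> 1 < x \<and> x < k" for x using ub_range k_def by fastforce
  have ur: "x \<in> ub (g = Gamma) k r \<Longrightarrow> k < x" for x using ub_range by blast
  have Crr: "Cr (g = Gamma) k r \<subseteq> insert k (ub (g = Gamma) k r)" by (rule Cr_sub)
  have k1: "1 < k" using arity_pos[of l] k_def by simp
  have candeq: "cand (FF s) v \<longleftrightarrow> v \<in> Cr (g = Gamma) k r" for v
    unfolding cand_root[OF s_def] ubs Crs using Cl Crr ul ur k1 by (auto; force)
  show ?thesis
  proof (cases "k \<in> Cr (g = Gamma) k r")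
    case True
    have "(LEAST v. cand (FF s) v) = k"
    proof (rule Least_equality)
      show "cand (FF s) k" using True candeq by simp
      show "\<And>y. cand (FF s) y \<Longrightarrow> k \<le> y" using candeq Crr ur by fastforce
    qed
    moreover have "\<exists>v. cand (FF s) v" using True candeq by blast
    ultimately have "splitv (FF s) = k" unfolding splitv_def by simp
    then show ?thesis by (simp add: s_def k_def)
  next
    case False
    have "ub (g = Gamma) k r = {}" using ub_nonempty False by blast
    then have nc: "\<not> cand (FF s) v" for v using candeq Crr False by auto
    have V: "Vset (FF s) = ub False 1 l \<union> {k}" using Vroot[OF s_def] ubs \<open>ub (g = Gamma) k r = {}\<close> by simp
    have ulk: "x \<in> ub False 1 l \<union> {k} \<Longrightarrow> x \<le> k" for x using ul by fastforce
    have fin: "finite (ub False 1 l \<union> {k})"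
      by (rule finite_subset[of _ "{..k}"]) (use ulk in force)+
    have "Max (ub False 1 l \<union> {k}) = k"
      by (rule Max_eqI[OF fin]) (use ulk in force)+
    then have "splitv (FF s) = k" using nc V unfolding splitv_def by auto
    then show ?thesis by (simp add: s_def k_def)
  qed
qed

lemma restrict_l:
  assumes "s = Node g l r"
  shows "{p \<in> AC c False 1 s. snd p \<le> 1 + arity l} = AC c False 1 l"
proof -
  have ar: "1 \<le> arity r" by (rule arity_pos)
  have "AC c False 1 s = (if oc c False s then {(1, 1 + arity l + arity r)} else {}) \<union> AC c False 1 l \<union> AC c (g = Gamma) (1 + arity l) r"
    using assms by (simp add: oc_def)
  moreover have "p \<in> AC c False 1 l \<Longrightarrow> snd p \<le> 1 + arity l" for p using bounds[of "fst p" "snd p" c False 1 l] by simp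
  moreover have "p \<in> AC c (g = Gamma) (1 + arity l) r \<Longrightarrow> \<not> snd p \<le> 1 + arity l" for p
    using bounds[of "fst p" "snd p" c "g = Gamma" "1 + arity l" r] by simp
  ultimately show ?thesis using ar by auto
qed

lemma restrict_r:
  assumes "s = Node g l r"
  shows "{p \<in> AC c False 1 s. 1 + arity l \<le> fst p} = AC c (g = Gamma) (1 + arity l) r"
proof -
  have al: "1 \<le> arity l" by (rule arity_pos)
  have "AC c False 1 s = (if oc c False s then {(1, 1 + arity l + arity r)} else {}) \<union> AC c False 1 l \<union> AC c (g = Gamma) (1 + arity l) r"
    using assms by (simp add: oc_def)
  moreover have "p \<in> AC c False 1 l \<Longrightarrow> \<not> 1 + arity l \<le> fst p" for p using bounds[of "fst p" "snd p" c False 1 l] by simp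
  moreover have "p \<in> AC c (g = Gamma) (1 + arity l) r \<Longrightarrow> 1 + arity l \<le> fst p" for p
    using bounds[of "fst p" "snd p" c "g = Gamma" "1 + arity l" r] by simp
  ultimately show ?thesis using al by auto
qed

lemma AC_False_from: "AC c False q r = (AC c rg q r - {(q, q + arity r)}) \<union> (if oc c False r then {(q, q + arity r)} else {})"
proof -
  have "AC c rg q r - {(q, q + arity r)} = AC c False q r - {(q, q + arity r)}"
    by (subst AC_rg[of c rg q r]) auto
  moreover have "AC c False q r = (AC c False q r - {(q, q + arity r)}) \<union> (if oc c False r then {(q, q + arity r)} else {})"
    using own[of q r c False] by auto
  ultimately show ?thesis by simp
qed

lemma inj_sh: "inj (sh d)"
  by (auto simp: inj_on_def sh_def prod_eq_iff)

lemma FF_eq: "FF s = FF t \<longleftrightarrow> arity s = arity t \<and> AC True False 1 s = AC True False 1 t \<and> AC False False 1 s = AC False False 1 t"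
  by (simp add: FF_def)

lemma arity_Node: "2 \<le> arity (Node g l r)"
  using arity_pos[of l] arity_pos[of r] by simp

lemma inj_normal: "normal s \<Longrightarrow> normal t \<Longrightarrow> FF s = FF t \<Longrightarrow> s = t"
proof (induction s arbitrary: t)
  case Leaf
  have "bsize (FF Leaf) = bsize (FF t)" using Leaf(3) by simp
  then have "arity t = 1" by (simp add: FF_def)
  then show ?case
  proof (cases t)
    case (Node g l r)
    then show ?thesis using arity_Node[of g l r] \<open>arity t = 1\<close> by simp
  qed simp
next
  case (Node g l r)
  show ?case
  proof (cases t)
    case Leaf
    have "bsize (FF (ftree.Node g l r)) = bsize (FF t)" using Node.prems(3) by simp
    then show ?thesis using Leaf arity_Node[of g l r] by (simp add: FF_def)
  next
    case (Node g' l' r')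
    note t = this
    define s where "s = ftree.Node g l r"
    have ar: "arity s = arity t" and eB: "AC True False 1 s = AC True False 1 t"
      and eR: "AC False False 1 s = AC False False 1 t" using Node.prems(3) by (auto simp: FF_def s_def)
    have o1: "(1, 1 + arity s) \<in> AC True False 1 s \<longleftrightarrow> basic s" using own[of 1 s True False] by (simp add: oc_def)
    have o2: "(1, 1 + arity t) \<in> AC True False 1 t \<longleftrightarrow> basic t" using own[of 1 t True False] by (simp add: oc_def)
    have "basic s = basic t" using o1 o2 ar eB by metis
    then have "(g = Alpha) = (g' = Alpha)" using t by (simp add: s_def)
    then have gg: "g' = g" by (cases g; cases g') auto
    have kk: "arity l' = arity l"
      using split_root[of g l r] split_root[of g' l' r'] Node.prems(1,2) Node.prems(3) t by simp
    have el: "AC c False 1 l = AC c False 1 l'" if "AC c False 1 s = AC c False 1 t" for c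
    proof -
      have "AC c False 1 l = {p \<in> AC c False 1 s. snd p \<le> 1 + arity l}" using restrict_l[OF s_def, of c] by simp
      also have "\<dots> = {p \<in> AC c False 1 t. snd p \<le> 1 + arity l'}" using that kk by simp
      also have "\<dots> = AC c False 1 l'" using restrict_l[OF t, of c] .
      finally show ?thesis .
    qed
    have "FF l = FF l'" using el[OF eB] el[OF eR] kk by (simp add: FF_def)
    then have ll: "l = l'" using Node.IH(1) Node.prems t by simp
    have arr: "arity r = arity r'" using ar kk t by (simp add: s_def)
    have er0: "AC c (g = Gamma) (1 + arity l) r = AC c (g = Gamma) (1 + arity l) r'" if "AC c False 1 s = AC c False 1 t" for c
    proof -
      have "AC c (g = Gamma) (1 + arity l) r = {p \<in> AC c False 1 s. 1 + arity l \<le> fst p}" using restrict_r[OF s_def, of c] by simp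
      also have "\<dots> = {p \<in> AC c False 1 t. 1 + arity l' \<le> fst p}" using that kk by simp
      also have "\<dots> = AC c (g' = Gamma) (1 + arity l') r'" using restrict_r[OF t, of c] .
      finally show ?thesis using kk gg by simp
    qed
    have er1: "AC c (g = Gamma) 1 r = AC c (g = Gamma) 1 r'" if "AC c False 1 s = AC c False 1 t" for c
    proof -
      have "sh (arity l) ` AC c (g = Gamma) 1 r = sh (arity l) ` AC c (g = Gamma) 1 r'"
        using er0[OF that] AC_shift[of c "g = Gamma" 1 "arity l" r] AC_shift[of c "g = Gamma" 1 "arity l" r'] by simp
      then show ?thesis using inj_sh inj_image_eq_iff by blast
    qed
    have bas: "basic r = basic r'"
    proof (cases g)
      case Alpha
      then show ?thesis using er1[OF eB] own[of 1 r True False] own[of 1 r' True False] arr by (simp add: oc_def)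
    next
      case Gamma
      then show ?thesis using er1[OF eR] own[of 1 r False True] own[of 1 r' False True] arr by (simp add: oc_def)
    qed
    have "AC c False 1 r = AC c False 1 r'" if "AC c False 1 s = AC c False 1 t" for c
      using AC_False_from[of c 1 r "g = Gamma"] AC_False_from[of c 1 r' "g = Gamma"] er1[OF that] arr bas
      by (simp add: oc_def)
    then have "FF r = FF r'" using eB eR arr by (simp add: FF_def)
    then have rr: "r = r'" using Node.IH(2) Node.prems t by simp
    show ?thesis using t gg ll rr by simp
  qed
qed

theorem theorem3p9:
  shows "(\<forall>s i t. 1 \<le> i \<longrightarrow> i \<le> arity s \<longrightarrow> eval (graft s i t) = bnc_comp (eval s) i (eval t))
       \<and> range eval = subop_ac
       \<and> (\<forall>s t. eval s = eval t \<longleftrightarrow> fcong s t)"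
proof (intro conjI allI impI)
  fix s i t assume "1 \<le> i" "i \<le> arity s"
  then show "eval (graft s i t) = bnc_comp (eval s) i (eval t)" by (rule part1)
next
  show "range eval = subop_ac" by (rule part2)
next
  fix s t
  show "eval s = eval t \<longleftrightarrow> fcong s t"
  proof
    assume e: "eval s = eval t"
    obtain ns where ns: "normal ns" "fcong s ns" using norm_ex by blast
    obtain nt where nt: "normal nt" "fcong t nt" using norm_ex by blast
    have "eval ns = eval nt" using e fcong_eval[OF ns(2)] fcong_eval[OF nt(2)] by simp
    then have "ns = nt" using inj_normal[OF ns(1) nt(1)] by (simp add: eval_FF)
    then show "fcong s t" using ns(2) nt(2) fcong.sym fcong.trans by metis
  next
    assume "fcong s t"
    then show "eval s = eval t" by (rule fcong_eval)
  qed
qed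

end
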